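(* Let $n\geq 1$. For a Tamari interval diagram $(u,v)$ of size $n$, let $\chi(u,v)$ be the binary relation $\lhd$ on the set $\{x_1,\dots,x_n\}$ consisting exactly of the pairs $x_{i+l}\lhd x_i$ for all $i\in[n]$ and $0\leq l\leq u_i$, and the pairs $x_{i-k}\lhd x_i$ for all $i\in[n]$ and $0\leq k\leq v_i$. Then $\chi(u,v)$ is an interval-poset of size $n$, and the map $\chi$ is a bijection from $\mathcal{TID}_n$ (the set of Tamari interval diagrams of size $n$) to $\mathcal{IP}_n$ (the set of interval-posets of size $n$).
   Context: $[n]=\{1,\dots,n\}$. A Tamari diagram of size $n$ is a word $u=u_1\cdots u_n$ of integers with $0\leq u_i\leq n-i$ for all $i\in[n]$ and $u_{i+j}\leq u_i-j$ for all $i\in[n]$ and $0\leq j\leq u_i$. A dual Tamari diagram of size $n$ is a word $v=v_1\cdots v_n$ of integers with $0\leq v_i\leq i-1$ for all $i\in[n]$ and $v_{i-j}\leq v_i-j$ for all $i\in[n]$ and $0\leq j\leq v_i$. A Tamari diagram $u$ and a dual Tamari diagram $v$ of the same size $n$ are compatible if for all $1\leq i<j\leq n$ with $j-i\leq u_i$ one has $v_j<j-i$; a compatible pair $(u,v)$ is a Tamari interval diagram of size $n$. An interval-poset of size $n$ is a partial order $\lhd$ on $\{x_1,\dots,x_n\}$ such that for all $i<k$: if $x_k\lhd x_i$ then $x_j\lhd x_i$ for all $i<j<k$, and if $x_i\lhd x_k$ then $x_j\lhd x_k$ for all $i<j<k$. *)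

theory Defs
  imports Main
begin

(* Words of size n are lists of length n; the i-th letter (1-based) is w ! (i-1). *)
definition letter :: "nat list \<Rightarrow> nat \<Rightarrow> nat" where
  "letter w i = w ! (i - 1)"

definition tamari_diagram :: "nat \<Rightarrow> nat list \<Rightarrow> bool" where
  "tamari_diagram n u \<longleftrightarrow> length u = n \<and>
     (\<forall>i\<in>{1..n}. letter u i \<le> n - i) \<and>
     (\<forall>i\<in>{1..n}. \<forall>j. j \<le> letter u i \<longrightarrow> letter u (i + j) \<le> letter u i - j)"

definition dual_tamari_diagram :: "nat \<Rightarrow> nat list \<Rightarrow> bool" where
  "dual_tamari_diagram n v \<longleftrightarrow> length v = n \<and>
     (\<forall>i\<in>{1..n}. letter v i \<le> i - 1) \<and>
     (\<forall>i\<in>{1..n}. \<forall>j. j \<le> letter v i \<longrightarrow> letter v (i - j) \<le> letter v i - j)"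

definition compatible :: "nat \<Rightarrow> nat list \<Rightarrow> nat list \<Rightarrow> bool" where
  "compatible n u v \<longleftrightarrow>
     (\<forall>i j. 1 \<le> i \<and> i < j \<and> j \<le> n \<and> j - i \<le> letter u i \<longrightarrow> letter v j < j - i)"

definition TID :: "nat \<Rightarrow> (nat list \<times> nat list) set" where
  "TID n = {(u, v). tamari_diagram n u \<and> dual_tamari_diagram n v \<and> compatible n u v}"

(* Relations on {x_1,...,x_n} are encoded as sets of index pairs:
   (a, b) \<in> R means x_a \<lhd> x_b. *)
definition interval_poset :: "nat \<Rightarrow> (nat \<times> nat) set \<Rightarrow> bool" where
  "interval_poset n R \<longleftrightarrow>
     R \<subseteq> {1..n} \<times> {1..n} \<and>
     (\<forall>x\<in>{1..n}. (x, x) \<in> R) \<and> antisym R \<and> trans R \<and>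
     (\<forall>i j k. 1 \<le> i \<and> i < j \<and> j < k \<and> k \<le> n \<longrightarrow>
        ((k, i) \<in> R \<longrightarrow> (j, i) \<in> R) \<and> ((i, k) \<in> R \<longrightarrow> (j, k) \<in> R))"

definition IP :: "nat \<Rightarrow> (nat \<times> nat) set set" where
  "IP n = {R. interval_poset n R}"

definition chi :: "nat \<Rightarrow> nat list \<times> nat list \<Rightarrow> (nat \<times> nat) set" where
  "chi n uv = (case uv of (u, v) \<Rightarrow>
     {(i + l, i) | i l. i \<in> {1..n} \<and> l \<le> letter u i} \<union>
     {(i - k, i) | i k. i \<in> {1..n} \<and> k \<le> letter v i})"

end

theory Submission
  imports Defs
begin

lemma chi_mem:
  "(a, b) \<in> chi n (u, v) \<longleftrightarrow> b \<in> {1..n} \<and>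
     ((b \<le> a \<and> a - b \<le> letter u b) \<or> (a \<le> b \<and> b - a \<le> letter v b))"
proof
  assume "(a, b) \<in> chi n (u, v)"
  then show "b \<in> {1..n} \<and> ((b \<le> a \<and> a - b \<le> letter u b) \<or> (a \<le> b \<and> b - a \<le> letter v b))"
    unfolding chi_def by auto
next
  assume H: "b \<in> {1..n} \<and> ((b \<le> a \<and> a - b \<le> letter u b) \<or> (a \<le> b \<and> b - a \<le> letter v b))"
  show "(a, b) \<in> chi n (u, v)"
  proof (cases "b \<le> a \<and> a - b \<le> letter u b")
    case True
    then have "(a, b) = (b + (a - b), b)" by simp
    then show ?thesis using H True unfolding chi_def by blast
  next
    case False
    then have F: "a \<le> b \<and> b - a \<le> letter v b" using H by blast
    then have "(a, b) = (b - (b - a), b)" by simp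
    then show ?thesis using H F unfolding chi_def by blast
  qed
qed

lemma TID_D:
  assumes "(u, v) \<in> TID n"
  shows "length u = n" "length v = n"
    "\<And>i. i \<in> {1..n} \<Longrightarrow> letter u i \<le> n - i"
    "\<And>i j. i \<in> {1..n} \<Longrightarrow> j \<le> letter u i \<Longrightarrow> letter u (i + j) \<le> letter u i - j"
    "\<And>i. i \<in> {1..n} \<Longrightarrow> letter v i \<le> i - 1"
    "\<And>i j. i \<in> {1..n} \<Longrightarrow> j \<le> letter v i \<Longrightarrow> letter v (i - j) \<le> letter v i - j"
    "\<And>i j. 1 \<le> i \<Longrightarrow> i < j \<Longrightarrow> j \<le> n \<Longrightarrow> j - i \<le> letter u i \<Longrightarrow> letter v j < j - i"
  using assms unfolding TID_def tamari_diagram_def dual_tamari_diagram_def compatible_def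
  by auto

lemma chi_ip:
  assumes T: "(u, v) \<in> TID n"
  shows "interval_poset n (chi n (u, v))"
proof -
  note D = TID_D[OF T]
  have sub: "chi n (u, v) \<subseteq> {1..n} \<times> {1..n}"
  proof
    fix p assume "p \<in> chi n (u, v)"
    moreover obtain a b where p: "p = (a, b)" by force
    ultimately have "(a, b) \<in> chi n (u, v)" by simp
    then have h: "b \<in> {1..n} \<and> ((b \<le> a \<and> a - b \<le> letter u b) \<or> (a \<le> b \<and> b - a \<le> letter v b))"
      using chi_mem by blast
    then have "letter u b \<le> n - b" "letter v b \<le> b - 1" using D(3) D(5) by auto
    then show "p \<in> {1..n} \<times> {1..n}" using h p by auto
  qed
  have refl: "\<forall>x\<in>{1..n}. (x, x) \<in> chi n (u, v)" using chi_mem by simp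
  have anti: "antisym (chi n (u, v))"
  proof (rule antisymI)
    fix a b assume ab: "(a, b) \<in> chi n (u, v)" and ba: "(b, a) \<in> chi n (u, v)"
    show "a = b"
    proof (rule ccontr)
      assume ne: "a \<noteq> b"
      have "\<And>a b. (a, b) \<in> chi n (u, v) \<Longrightarrow> (b, a) \<in> chi n (u, v) \<Longrightarrow> b < a \<Longrightarrow> False"
      proof -
        fix a b assume ab: "(a, b) \<in> chi n (u, v)" and ba: "(b, a) \<in> chi n (u, v)" and lt: "b < a"
        have 1: "a - b \<le> letter u b" "b \<ge> 1" using ab lt chi_mem[of a b n u v] by auto
        have 2: "a - b \<le> letter v a" "a \<le> n" using ba lt chi_mem[of b a n u v] by auto
        show False using D(7)[of b a] 1 2 lt by auto
      qed
      then show False using ab ba ne by (metis linorder_neqE_nat)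
    qed
  qed
  have tr: "trans (chi n (u, v))"
  proof (rule transI)
    fix a b c assume ab: "(a, b) \<in> chi n (u, v)" and bc: "(b, c) \<in> chi n (u, v)"
    have hb: "b \<in> {1..n}" and hab: "(b \<le> a \<and> a - b \<le> letter u b) \<or> (a \<le> b \<and> b - a \<le> letter v b)"
      using ab chi_mem by blast+
    have hc: "c \<in> {1..n}" and hbc: "(c \<le> b \<and> b - c \<le> letter u c) \<or> (b \<le> c \<and> c - b \<le> letter v c)"
      using bc chi_mem by blast+
    have ub: "letter u b \<le> n - b" "letter v b \<le> b - 1" using D(3) D(5) hb by auto
    have uc: "letter u c \<le> n - c" "letter v c \<le> c - 1" using D(3) D(5) hc by auto
    have "(c \<le> a \<and> a - c \<le> letter u c) \<or> (a \<le> c \<and> c - a \<le> letter v c)"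
    proof (cases "b \<le> a")
      case ba: True
      show ?thesis
      proof (cases "c \<le> b")
        case True
        then have bc1: "b - c \<le> letter u c" using hbc by auto
        have "letter u (c + (b - c)) \<le> letter u c - (b - c)" using D(4)[OF hc bc1] .
        then have "letter u b \<le> letter u c - (b - c)" using True by simp
        then have x1: "letter u b + (b - c) \<le> letter u c" using bc1 by linarith
        have x2: "a - b \<le> letter u b" using hab ba by auto
        have "a - c = (a - b) + (b - c)" using ba True by simp
        then show ?thesis using x1 x2 ba True by linarith
      next
        case False
        then have cb: "c - b \<le> letter v c" using hbc by auto
        have "\<not> c - b \<le> letter u b" using D(7)[of b c] hb hc False cb by auto
        then show ?thesis using ba False hab cb by auto
      qed
    next
      case ab': False
      then have abv: "b - a \<le> letter v b" using hab by auto
      show ?thesis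
      proof (cases "c \<le> b")
        case True
        then have bcu: "b - c \<le> letter u c" using hbc by auto
        show ?thesis
        proof (cases "c \<le> a")
          case True then show ?thesis using bcu ab' by auto
        next
          case False
          show ?thesis
          proof (cases "c = b")
            case True then show ?thesis using abv False by auto
          next
          case cnb: False
          have "c < b" using cnb \<open>c \<le> b\<close> by simp
          then have "letter v b < b - c" using D(7)[of c b] hb hc bcu by auto
          then show ?thesis using abv False by auto
          qed
        qed
      next
        case False
        then have "c - b \<le> letter v c" using hbc by auto
        then have "letter v b \<le> letter v c - (c - b)" using D(6)[OF hc, of "c - b"] False by simp
        then show ?thesis using ab' False abv by auto
      qed
    qed
    then show "(a, c) \<in> chi n (u, v)" using hc chi_mem by blast
  qed
  have int: "\<forall>i j k. 1 \<le> i \<and> i < j \<and> j < k \<and> k \<le> n \<longrightarrow>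
        ((k, i) \<in> chi n (u, v) \<longrightarrow> (j, i) \<in> chi n (u, v)) \<and> ((i, k) \<in> chi n (u, v) \<longrightarrow> (j, k) \<in> chi n (u, v))"
    using chi_mem by auto
  show ?thesis unfolding interval_poset_def using sub refl anti tr int by blast
qed

lemma letter_eqI:
  assumes "length u = n" "length u' = n" "\<And>i. i \<in> {1..n} \<Longrightarrow> letter u i = letter u' i"
  shows "u = u'"
proof (rule nth_equalityI)
  show "length u = length u'" using assms by simp
  fix k assume "k < length u"
  then have "letter u (k+1) = letter u' (k+1)" using assms by auto
  then show "u ! k = u' ! k" unfolding letter_def by simp
qed

lemma chi_inj:
  assumes T1: "(u, v) \<in> TID n" and T2: "(u', v') \<in> TID n" and E: "chi n (u, v) = chi n (u', v')"
  shows "u = u' \<and> v = v'"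
proof -
  have lu: "letter u i \<le> letter u' i" if "(u, v) \<in> TID n" "(u', v') \<in> TID n"
     "chi n (u, v) = chi n (u', v')" "i \<in> {1..n}" for u v u' v' i
  proof -
    have "(i + letter u i, i) \<in> chi n (u, v)" using chi_mem[of "i + letter u i" i n u v] that(4) by simp
    then have "(i + letter u i, i) \<in> chi n (u', v')" using that by simp
    then show ?thesis using chi_mem[of "i + letter u i" i n u' v'] by (cases "letter u i = 0") auto
  qed
  have lv: "letter v i \<le> letter v' i" if "(u, v) \<in> TID n" "(u', v') \<in> TID n"
     "chi n (u, v) = chi n (u', v')" "i \<in> {1..n}" for u v u' v' i
  proof -
    have vi: "letter v i \<le> i - 1" using TID_D(5)[OF that(1)] that(4) by simp
    have "(i - letter v i, i) \<in> chi n (u, v)" using chi_mem[of "i - letter v i" i n u v] that(4) vi by simp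
    then have h: "(i - letter v i, i) \<in> chi n (u', v')" using that by simp
    note vi
    then show ?thesis using h chi_mem[of "i - letter v i" i n u' v'] by auto
  qed
  have "u = u'"
    by (rule letter_eqI[of u n]) (use TID_D(1)[OF T1] TID_D(1)[OF T2] lu[OF T1 T2 E] lu[OF T2 T1 E[symmetric]] in \<open>auto intro: le_antisym\<close>)
  moreover have "v = v'"
    by (rule letter_eqI[of v n]) (use TID_D(2)[OF T1] TID_D(2)[OF T2] lv[OF T1 T2 E] lv[OF T2 T1 E[symmetric]] in \<open>auto intro: le_antisym\<close>)
  ultimately show ?thesis by simp
qed

definition UU :: "(nat \<times> nat) set \<Rightarrow> nat \<Rightarrow> nat" where
  "UU R i = Max {l. (i + l, i) \<in> R}"

definition VV :: "(nat \<times> nat) set \<Rightarrow> nat \<Rightarrow> nat" where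
  "VV R i = Max {k. (i - k, i) \<in> R}"

lemma UU_key:
  assumes R: "interval_poset n R" and i: "i \<in> {1..n}"
  shows "(i + l, i) \<in> R \<longleftrightarrow> l \<le> UU R i"
proof -
  have sub: "R \<subseteq> {1..n} \<times> {1..n}" and refl: "(i, i) \<in> R"
   and int: "\<And>i j k. 1 \<le> i \<Longrightarrow> i < j \<Longrightarrow> j < k \<Longrightarrow> k \<le> n \<Longrightarrow> (k, i) \<in> R \<Longrightarrow> (j, i) \<in> R"
    using R i unfolding interval_poset_def by auto
  have fin: "finite {l. (i + l, i) \<in> R}"
    by (rule finite_subset[of _ "{..n}"]) (use sub in auto)
  have ne: "0 \<in> {l. (i + l, i) \<in> R}" using refl by simp
  have M: "(i + UU R i, i) \<in> R" unfolding UU_def using Max_in[OF fin] ne by blast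
  show ?thesis
  proof
    assume "(i + l, i) \<in> R" then show "l \<le> UU R i" unfolding UU_def using Max_ge[OF fin] by blast
  next
    assume l: "l \<le> UU R i"
    show "(i + l, i) \<in> R"
    proof (cases "l = 0 \<or> l = UU R i")
      case True then show ?thesis using refl M by auto
    next
      case False
      have "i + UU R i \<le> n" using M sub by auto
      then show ?thesis using int[of i "i + l" "i + UU R i"] i False l M by auto
    qed
  qed
qed

lemma VV_key:
  assumes R: "interval_poset n R" and i: "i \<in> {1..n}"
  shows "(i - k, i) \<in> R \<longleftrightarrow> k \<le> VV R i" and "VV R i < i"
proof -
  have sub: "R \<subseteq> {1..n} \<times> {1..n}" and refl: "(i, i) \<in> R"
   and int: "\<And>i j k. 1 \<le> i \<Longrightarrow> i < j \<Longrightarrow> j < k \<Longrightarrow> k \<le> n \<Longrightarrow> (i, k) \<in> R \<Longrightarrow> (j, k) \<in> R"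
    using R i unfolding interval_poset_def by auto
  have ss: "{k. (i - k, i) \<in> R} \<subseteq> {..<i}"
  proof
    fix k assume "k \<in> {k. (i - k, i) \<in> R}"
    then have "i - k \<ge> 1" using sub by auto
    then show "k \<in> {..<i}" by simp
  qed
  have fin: "finite {k. (i - k, i) \<in> R}" by (rule finite_subset[OF ss]) simp
  have ne: "0 \<in> {k. (i - k, i) \<in> R}" using refl by simp
  have Min: "VV R i \<in> {k. (i - k, i) \<in> R}" unfolding VV_def using Max_in[OF fin] ne by blast
  then have M: "(i - VV R i, i) \<in> R" by simp
  show lt: "VV R i < i" using Min ss by auto
  show "(i - k, i) \<in> R \<longleftrightarrow> k \<le> VV R i"
  proof
    assume "(i - k, i) \<in> R" then show "k \<le> VV R i" unfolding VV_def using Max_ge[OF fin] by blast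
  next
    assume l: "k \<le> VV R i"
    show "(i - k, i) \<in> R"
    proof (cases "k = 0 \<or> k = VV R i")
      case True then show ?thesis using refl M by auto
    next
      case False
      have "i \<le> n" using i by simp
      then show ?thesis using int[of "i - VV R i" "i - k" i] i False l M lt by auto
    qed
  qed
qed

lemma letter_map: "i \<in> {1..n} \<Longrightarrow> letter (map f [1..<n+1]) i = f i"
proof -
  assume i: "i \<in> {1..n}"
  then have "i - 1 < n" by auto
  moreover have "[1..<n+1] ! (i - 1) = i" using i by (simp add: nth_upt del: upt_Suc)
  ultimately show ?thesis unfolding letter_def by (simp del: upt_Suc)
qed

lemma chi_surj:
  assumes R: "interval_poset n R"
  shows "\<exists>uv \<in> TID n. chi n uv = R"
proof -
  define u where "u = map (UU R) [1..<n+1]"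
  define v where "v = map (VV R) [1..<n+1]"
  have lu: "\<And>i. i \<in> {1..n} \<Longrightarrow> letter u i = UU R i" unfolding u_def by (rule letter_map)
  have lv: "\<And>i. i \<in> {1..n} \<Longrightarrow> letter v i = VV R i" unfolding v_def by (rule letter_map)
  have sub: "R \<subseteq> {1..n} \<times> {1..n}" and tr: "trans R" and an: "antisym R"
    using R unfolding interval_poset_def by auto
  have Uk: "\<And>i l. i \<in> {1..n} \<Longrightarrow> (i + l, i) \<in> R \<longleftrightarrow> l \<le> letter u i"
    using UU_key[OF R] lu by simp
  have Vk: "\<And>i k. i \<in> {1..n} \<Longrightarrow> (i - k, i) \<in> R \<longleftrightarrow> k \<le> letter v i"
    using VV_key(1)[OF R] lv by simp
  have Vlt: "\<And>i. i \<in> {1..n} \<Longrightarrow> letter v i < i" using VV_key(2)[OF R] lv by simp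
  have t1: "tamari_diagram n u"
    unfolding tamari_diagram_def
  proof (intro conjI ballI allI impI)
    show "length u = n" unfolding u_def by simp
  next
    fix i assume i: "i \<in> {1..n}"
    have "(i + letter u i, i) \<in> R" using Uk[OF i] by simp
    then show "letter u i \<le> n - i" using sub by auto
  next
    fix i j assume i: "i \<in> {1..n}" and j: "j \<le> letter u i"
    have a: "(i + j, i) \<in> R" using Uk[OF i] j by simp
    then have ij: "i + j \<in> {1..n}" using sub by auto
    have b: "(i + j + letter u (i + j), i + j) \<in> R" using Uk[OF ij] by simp
    have "(i + (j + letter u (i + j)), i) \<in> R" using transD[OF tr b a] by (simp add: add.assoc)
    then have "j + letter u (i + j) \<le> letter u i" using Uk[OF i] by blast
    then show "letter u (i + j) \<le> letter u i - j" by simp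
  qed
  have t2: "dual_tamari_diagram n v"
    unfolding dual_tamari_diagram_def
  proof (intro conjI ballI allI impI)
    show "length v = n" unfolding v_def by simp
  next
    fix i assume i: "i \<in> {1..n}"
    show "letter v i \<le> i - 1" using Vlt[OF i] by simp
  next
    fix i j assume i: "i \<in> {1..n}" and j: "j \<le> letter v i"
    have a: "(i - j, i) \<in> R" using Vk[OF i] j by simp
    then have ij: "i - j \<in> {1..n}" using sub by auto
    have b: "(i - j - letter v (i - j), i - j) \<in> R" using Vk[OF ij] by simp
    have "(i - (j + letter v (i - j)), i) \<in> R" using transD[OF tr b a] by (simp add: diff_diff_add)
    then have "j + letter v (i - j) \<le> letter v i" using Vk[OF i] by blast
    then show "letter v (i - j) \<le> letter v i - j" by simp
  qed
  have t3: "compatible n u v"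
    unfolding compatible_def
  proof (intro allI impI)
    fix i j assume h: "1 \<le> i \<and> i < j \<and> j \<le> n \<and> j - i \<le> letter u i"
    then have i: "i \<in> {1..n}" and jj: "j \<in> {1..n}" by auto
    have "(i + (j - i), i) \<in> R" using Uk[OF i] h by blast
    then have a: "(j, i) \<in> R" using h by simp
    show "letter v j < j - i"
    proof (rule ccontr)
      assume "\<not> letter v j < j - i"
      then have "(j - (j - i), j) \<in> R" using Vk[OF jj] by simp
      then have "(i, j) \<in> R" using h by simp
      then show False using antisymD[OF an a] h by simp
    qed
  qed
  have TT: "(u, v) \<in> TID n" unfolding TID_def using t1 t2 t3 by simp
  have "chi n (u, v) = R"
  proof (rule set_eqI)
    fix p :: "nat \<times> nat"
    obtain a b where p: "p = (a, b)" by force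
    show "p \<in> chi n (u, v) \<longleftrightarrow> p \<in> R"
    proof
      assume "p \<in> chi n (u, v)"
      then have h: "b \<in> {1..n} \<and> ((b \<le> a \<and> a - b \<le> letter u b) \<or> (a \<le> b \<and> b - a \<le> letter v b))"
        using chi_mem[of a b n u v] p by simp
      show "p \<in> R"
      proof (cases "b \<le> a \<and> a - b \<le> letter u b")
        case True
        then have "(b + (a - b), b) \<in> R" using Uk[of b "a - b"] h by simp
        then show ?thesis using True p by simp
      next
        case False
        then have "a \<le> b \<and> b - a \<le> letter v b" using h by blast
        then have "(b - (b - a), b) \<in> R" and "a \<le> b" using Vk[of b "b - a"] h by simp_all
        then show ?thesis using p by simp
      qed
    next
      assume "p \<in> R"
      then have ab: "(a, b) \<in> R" using p by simp
      then have b: "b \<in> {1..n}" using sub by auto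
      have "(b \<le> a \<and> a - b \<le> letter u b) \<or> (a \<le> b \<and> b - a \<le> letter v b)"
      proof (cases "b \<le> a")
        case True
        then have "(b + (a - b), b) \<in> R" using ab by simp
        then show ?thesis using Uk[OF b, of "a - b"] True by simp
      next
        case False
        then have "(b - (b - a), b) \<in> R" using ab by simp
        then show ?thesis using Vk[OF b, of "b - a"] False by simp
      qed
      then show "p \<in> chi n (u, v)" using chi_mem[of a b n u v] p b by simp
    qed
  qed
  then show ?thesis using TT by blast
qed

theorem theorem1p4:
  fixes n :: nat
  assumes "n \<ge> 1"
  shows "(\<forall>uv \<in> TID n. interval_poset n (chi n uv)) \<and> bij_betw (chi n) (TID n) (IP n)"
proof -
  have A: "\<forall>uv \<in> TID n. interval_poset n (chi n uv)" using chi_ip by auto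
  have inj: "inj_on (chi n) (TID n)"
  proof (rule inj_onI)
    fix x y assume "x \<in> TID n" "y \<in> TID n" "chi n x = chi n y"
    then show "x = y" using chi_inj[of "fst x" "snd x" n "fst y" "snd y"] by (simp add: prod_eq_iff)
  qed
  have img: "chi n ` TID n = IP n"
  proof
    show "chi n ` TID n \<subseteq> IP n" using A unfolding IP_def by auto
    show "IP n \<subseteq> chi n ` TID n"
    proof
      fix R assume "R \<in> IP n"
      then obtain uv where "uv \<in> TID n" "chi n uv = R" using chi_surj[of n R] unfolding IP_def by auto
      then show "R \<in> chi n ` TID n" by blast
    qed
  qed
  show ?thesis using A inj img unfolding bij_betw_def by blast
qed

end
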